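(* Let ${\bm G}$ be a random matrix in $\mathbb{R}^{m\times n}$ with $\mathbb{E}[{\bm G}]={\bm M}$ and $\mathbb{E}[\|{\bm G}-{\bm M}\|_F^\alpha]\le\sigma^\alpha$ for some $\alpha\in(1,2]$, $\sigma>0$. Let $\tau>0$, $d=\min\{m,n\}$, and suppose $\|{\bm M}\|_F\le\tau/2$. Then $$\mathbb{E}\big[\|\mathcal{C}_\tau({\bm G})\|_F^2\big]\le 2\|{\bm M}\|_F^2+\big(2^\alpha d+3(2/3)^{\alpha-1}\big)\tau^{2-\alpha}\sigma^\alpha\le 2\|{\bm M}\|_F^2+8d\,\tau^{2-\alpha}\sigma^\alpha.$$
   Context: $\|\cdot\|_F$ is the Frobenius norm. Spectral clipping: for ${\bm G}\in\mathbb{R}^{m\times n}$ with (thin) SVD ${\bm G}={\bm U}\,\mathrm{diag}(\sigma_1,\dots,\sigma_d){\bm V}^\top$, $d=\min\{m,n\}$, and threshold $\tau>0$, define $\mathcal{C}_\tau({\bm G}):={\bm U}\,\mathrm{diag}(\min\{\sigma_1,\tau\},\dots,\min\{\sigma_d,\tau\}){\bm V}^\top$. *)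

theory Defs
  imports "HOL-Probability.Probability"
begin

text \<open>Matrices in R^{m x n} are represented as real^'n^'m (rows indexed by 'm,
  columns by 'n); entry (i,j) is A $ i $ j.\<close>

definition fro_norm :: "real^'n^'m \<Rightarrow> real" where
  "fro_norm A = sqrt (\<Sum>i\<in>UNIV. \<Sum>j\<in>UNIV. (A $ i $ j)\<^sup>2)"

definition outer :: "real^'m \<Rightarrow> real^'n \<Rightarrow> real^'n^'m" where
  "outer u v = (\<chi> i j. u $ i * v $ j)"

text \<open>Thin SVD G = U diag(s_0,...,s_{d-1}) V^T with d = min m n, written as a sum of
  rank-one terms s_k u_k v_k^T, where (u_k)_{k<d} and (v_k)_{k<d} are orthonormal
  families and s_k \<ge> 0.\<close>
definition is_thin_svd :: "real^'n^'m \<Rightarrow> (nat \<Rightarrow> real^'m) \<Rightarrow> (nat \<Rightarrow> real) \<Rightarrow> (nat \<Rightarrow> real^'n) \<Rightarrow> bool" where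
  "is_thin_svd G U s V \<longleftrightarrow>
     (let d = min CARD('m) CARD('n) in
       (\<forall>k<d. \<forall>l<d. U k \<bullet> U l = (if k = l then 1 else 0)) \<and>
       (\<forall>k<d. \<forall>l<d. V k \<bullet> V l = (if k = l then 1 else 0)) \<and>
       (\<forall>k<d. s k \<ge> 0) \<and>
       G = (\<Sum>k<d. s k *\<^sub>R outer (U k) (V k)))"

text \<open>Spectral clipping C_tau(G) = U diag(min(s_k,tau)) V^T for a thin SVD of G
  (the result does not depend on the choice of SVD).\<close>
definition spectral_clip :: "real \<Rightarrow> real^'n^'m \<Rightarrow> real^'n^'m" where
  "spectral_clip \<tau> G = (SOME C. \<exists>U s V. is_thin_svd G U s V \<and>
       C = (\<Sum>k<min CARD('m) CARD('n). min (s k) \<tau> *\<^sub>R outer (U k) (V k)))"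

end

theory Submission
  imports Defs
begin

definition orthon :: "nat \<Rightarrow> (nat \<Rightarrow> real^'a) \<Rightarrow> bool" where
  "orthon k U \<longleftrightarrow> (\<forall>i<k. \<forall>j<k. U i \<bullet> U j = (if i = j then 1 else 0))"

lemma outer_mult: "outer u v *v x = (v \<bullet> x) *\<^sub>R u"
  by (simp add: vec_eq_iff outer_def matrix_vector_mult_def inner_vec_def sum_distrib_left mult_ac)

lemma fro_sq: "(fro_norm A)\<^sup>2 = (\<Sum>i\<in>UNIV. \<Sum>j\<in>UNIV. (A $ i $ j)\<^sup>2)"
  unfolding fro_norm_def by (simp add: sum_nonneg)

lemma fro_sum:
  fixes U :: "nat \<Rightarrow> real^'m" and V :: "nat \<Rightarrow> real^'n"
  assumes "orthon k U" "orthon k V"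
  shows "(fro_norm (\<Sum>l<k. c l *\<^sub>R outer (U l) (V l)))\<^sup>2 = (\<Sum>l<k. (c l)\<^sup>2)"
proof -
  have "(fro_norm (\<Sum>l<k. c l *\<^sub>R outer (U l) (V l)))\<^sup>2
     = (\<Sum>i\<in>UNIV. \<Sum>j\<in>UNIV. (\<Sum>l<k. c l * (U l $ i * V l $ j))\<^sup>2)"
    unfolding fro_sq by (simp add: outer_def sum_component)
  also have "\<dots> = (\<Sum>i\<in>UNIV. \<Sum>j\<in>UNIV. \<Sum>l<k. \<Sum>l'<k. c l * c l' * (U l $ i * U l' $ i) * (V l $ j * V l' $ j))"
    by (simp add: power2_eq_square sum_product mult_ac)
  also have "\<dots> = (\<Sum>l<k. \<Sum>l'<k. c l * c l' * (U l \<bullet> U l') * (V l \<bullet> V l'))"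
  proof -
    have "(\<Sum>i\<in>UNIV. \<Sum>j\<in>UNIV. \<Sum>l<k. \<Sum>l'<k. c l * c l' * (U l $ i * U l' $ i) * (V l $ j * V l' $ j))
        = (\<Sum>i\<in>UNIV. \<Sum>l<k. \<Sum>j\<in>UNIV. \<Sum>l'<k. c l * c l' * (U l $ i * U l' $ i) * (V l $ j * V l' $ j))"
      by (rule sum.cong[OF refl], rule sum.swap)
    also have "\<dots> = (\<Sum>l<k. \<Sum>i\<in>UNIV. \<Sum>j\<in>UNIV. \<Sum>l'<k. c l * c l' * (U l $ i * U l' $ i) * (V l $ j * V l' $ j))"
      by (rule sum.swap)
    also have "\<dots> = (\<Sum>l<k. \<Sum>i\<in>UNIV. \<Sum>l'<k. \<Sum>j\<in>UNIV. c l * c l' * (U l $ i * U l' $ i) * (V l $ j * V l' $ j))"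
      by (rule sum.cong[OF refl], rule sum.cong[OF refl], rule sum.swap)
    also have "\<dots> = (\<Sum>l<k. \<Sum>l'<k. \<Sum>i\<in>UNIV. \<Sum>j\<in>UNIV. c l * c l' * (U l $ i * U l' $ i) * (V l $ j * V l' $ j))"
      by (rule sum.cong[OF refl], rule sum.swap)
    also have "\<dots> = (\<Sum>l<k. \<Sum>l'<k. c l * c l' * (U l \<bullet> U l') * (V l \<bullet> V l'))"
      by (simp add: inner_vec_def sum_distrib_left sum_distrib_right sum_product mult_ac)
    finally show ?thesis .
  qed
  also have "\<dots> = (\<Sum>l<k. (c l)\<^sup>2)"
  proof (rule sum.cong[OF refl])
    fix l assume l: "l \<in> {..<k}"
    have "(\<Sum>l'<k. c l * c l' * (U l \<bullet> U l') * (V l \<bullet> V l')) = (\<Sum>l'<k. if l' = l then (c l)\<^sup>2 else 0)"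
      using assms l unfolding orthon_def by (intro sum.cong) (auto simp: power2_eq_square)
    also have "\<dots> = (c l)\<^sup>2" using l by (simp add: sum.delta')
    finally show "(\<Sum>l'<k. c l * c l' * (U l \<bullet> U l') * (V l \<bullet> V l')) = (c l)\<^sup>2" .
  qed
  finally show ?thesis .
qed

lemma perp_decomp:
  assumes "orthon k V"
  shows "\<forall>i<k. V i \<bullet> (z - (\<Sum>j<k. (z \<bullet> V j) *\<^sub>R V j)) = 0"
proof (intro allI impI)
  fix i assume i: "i < k"
  have "V i \<bullet> (\<Sum>j<k. (z \<bullet> V j) *\<^sub>R V j) = (\<Sum>j<k. (z \<bullet> V j) * (V i \<bullet> V j))"
    by (simp add: inner_sum_right)
  also have "\<dots> = (\<Sum>j<k. if j = i then z \<bullet> V i else 0)"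
    using assms i unfolding orthon_def by (intro sum.cong) auto
  also have "\<dots> = z \<bullet> V i" using i by (simp add: sum.delta')
  finally show "V i \<bullet> (z - (\<Sum>j<k. (z \<bullet> V j) *\<^sub>R V j)) = 0"
    by (simp add: inner_diff_right inner_commute)
qed

lemma mat_kills_span:
  fixes B :: "real^'n^'m" and k :: nat
  assumes "\<forall>i<k. B *v V i = 0"
  shows "B *v (\<Sum>j<k. c j *\<^sub>R V j) = 0"
  using assms by (induction k) (simp_all add: matrix_vector_right_distrib matrix_vector_mult_scaleR)

lemma inner_span_zero:
  fixes k :: nat
  assumes "\<forall>i<k. v \<bullet> V i = 0"
  shows "v \<bullet> (\<Sum>j<k. c j *\<^sub>R V j) = 0"
  using assms by (simp add: inner_sum_right)

lemma full_orthon_zero: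
  fixes V :: "nat \<Rightarrow> real^'n"
  assumes "orthon CARD('n) V" "\<forall>i<CARD('n). w \<bullet> V i = 0"
  shows "w = 0"
proof (rule ccontr)
  assume w: "w \<noteq> 0"
  define S where "S = insert w (V ` {..<CARD('n)})"
  have VV: "V i \<bullet> V i = 1" if "i < CARD('n)" for i using assms(1) that unfolding orthon_def by auto
  have injV: "inj_on V {..<CARD('n)}"
  proof (rule inj_onI)
    fix i j assume "i \<in> {..<CARD('n)}" "j \<in> {..<CARD('n)}" "V i = V j"
    then show "i = j" using assms(1) VV unfolding orthon_def by (metis lessThan_iff zero_neq_one)
  qed
  have wnot: "w \<notin> V ` {..<CARD('n)}"
    using assms(2) VV by auto
  have "pairwise orthogonal S"
    unfolding S_def pairwise_def orthogonal_def
    using assms unfolding orthon_def by (auto simp: inner_commute)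
  moreover have "0 \<notin> S"
  proof -
    have "V i \<noteq> 0" if "i < CARD('n)" for i using VV[OF that] by auto
    then show ?thesis unfolding S_def using w by auto
  qed
  ultimately have "independent S" by (rule pairwise_orthogonal_independent)
  then have "card S \<le> CARD('n)" using independent_bound by fastforce
  moreover have "card S = Suc CARD('n)"
    unfolding S_def using wnot injV by (simp add: card_image)
  ultimately show False by simp
qed

lemma exists_perp:
  fixes V :: "nat \<Rightarrow> real^'n"
  assumes "k < CARD('n)"
  shows "\<exists>x. norm x = 1 \<and> (\<forall>i<k. V i \<bullet> x = 0)"
proof -
  have "dim (V ` {..<k}) \<le> card (V ` {..<k})"
    by (rule dim_le_card) (auto intro: span_base)
  also have "\<dots> \<le> k" using card_image_le[of "{..<k}" V] by simp
  finally have dimlt: "dim (V ` {..<k}) < DIM(real^'n)" using assms by simp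
  obtain x where x: "x \<noteq> 0" "\<And>y. y \<in> span (V ` {..<k}) \<Longrightarrow> orthogonal x y"
    using orthogonal_to_subspace_exists[OF dimlt] by metis
  have "V i \<bullet> x = 0" if "i < k" for i
    using x(2)[of "V i"] that by (auto intro: span_base simp: orthogonal_def inner_commute)
  then show ?thesis using x(1)
    by (intro exI[of _ "(1 / norm x) *\<^sub>R x"]) auto
qed

lemma quad_zero:
  fixes a b :: real
  assumes "\<forall>t. t * (2 * a) + t\<^sup>2 * b \<le> 0"
  shows "a = 0"
proof (rule ccontr)
  assume a: "a \<noteq> 0"
  define c where "c = \<bar>b\<bar> + 1"
  have c: "c > 0" "2 * c + b > 0" unfolding c_def by (auto simp: abs_if)
  define t where "t = a / c"
  have "t * (2 * a) + t\<^sup>2 * b \<le> 0" using assms by blast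
  moreover have "t * (2 * a) + t\<^sup>2 * b = (a * a) * (2 * c + b) / (c * c)"
    unfolding t_def using c by (simp add: field_simps power2_eq_square)
  moreover have "(a * a) * (2 * c + b) / (c * c) > 0" proof -
    have "a * a > 0" using a by (metis not_real_square_gt_zero)
    then have "a * a * (2 * c + b) > 0" using mult_pos_pos[of "a * a" "2 * c + b"] c(2) by blast
    moreover have "c * c > 0" using c by simp
    ultimately show ?thesis by (rule divide_pos_pos)
  qed
  ultimately show False by linarith
qed

lemma norm_lin:
  fixes a b :: "'a::real_inner"
  shows "(norm (a + t *\<^sub>R b))\<^sup>2 = (norm a)\<^sup>2 + t * (2 * (a \<bullet> b)) + t\<^sup>2 * (norm b)\<^sup>2"
proof -
  have "(norm (a + t *\<^sub>R b))\<^sup>2 = (a + t *\<^sub>R b) \<bullet> (a + t *\<^sub>R b)" by (rule power2_norm_eq_inner)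
  also have "\<dots> = a \<bullet> a + t * (2 * (a \<bullet> b)) + t\<^sup>2 * (b \<bullet> b)"
    by (simp add: inner_add_left inner_add_right inner_commute algebra_simps power2_eq_square)
  finally show ?thesis by (simp add: power2_norm_eq_inner)
qed

lemma svd_step:
  fixes B :: "real^'n^'m" and U :: "nat \<Rightarrow> real^'m" and V :: "nat \<Rightarrow> real^'n"
  assumes km: "k < CARD('m)" and kn: "k < CARD('n)" and oU: "orthon k U" and oV: "orthon k V"
    and BV: "\<forall>i<k. B *v V i = 0" and UB: "\<forall>i<k. \<forall>x. U i \<bullet> (B *v x) = 0"
  shows "\<exists>u v s. s \<ge> 0 \<and> norm u = 1 \<and> norm v = 1 \<and> (\<forall>i<k. U i \<bullet> u = 0)
     \<and> (\<forall>i<k. V i \<bullet> v = 0) \<and> B *v v = s *\<^sub>R u \<and> (\<forall>x. u \<bullet> (B *v x) = s * (v \<bullet> x))"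
proof -
  define P where "P = (\<Inter>i<k. {x::real^'n. V i \<bullet> x = 0})"
  define K where "K = sphere (0::real^'n) 1 \<inter> P"
  have Pmem: "x \<in> P \<longleftrightarrow> (\<forall>i<k. V i \<bullet> x = 0)" for x unfolding P_def by auto
  have "compact K" unfolding K_def P_def
    by (intro compact_Int_closed compact_sphere closed_INT) (auto intro: closed_hyperplane)
  moreover have "K \<noteq> {}"
  proof -
    obtain x :: "real^'n" where "norm x = 1" "\<forall>i<k. V i \<bullet> x = 0" using exists_perp[OF kn, of V] by blast
    then have "x \<in> K" unfolding K_def using Pmem by auto
    then show ?thesis by blast
  qed
  moreover have "continuous_on K (\<lambda>x. norm (B *v x))" by (intro continuous_intros)
  ultimately obtain v where vK: "v \<in> K" and vmax: "\<And>y. y \<in> K \<Longrightarrow> norm (B *v y) \<le> norm (B *v v)"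
    using continuous_attains_sup[of K "\<lambda>x. norm (B *v x)"] by blast
  define s where "s = norm (B *v v)"
  have s0: "s \<ge> 0" unfolding s_def by simp
  have nv: "norm v = 1" and vP: "\<forall>i<k. V i \<bullet> v = 0" using vK Pmem unfolding K_def by auto
  have bound: "norm (B *v x) \<le> s * norm x" if xP: "\<forall>i<k. V i \<bullet> x = 0" for x
  proof (cases "x = 0")
    case True then show ?thesis by simp
  next
    case False
    have "(1 / norm x) *\<^sub>R x \<in> K" using False xP Pmem unfolding K_def by auto
    then have "norm (B *v ((1 / norm x) *\<^sub>R x)) \<le> s" unfolding s_def by (rule vmax)
    then have "norm (B *v x) / norm x \<le> s" by (simp add: matrix_vector_mult_scaleR)
    then show ?thesis using False by (simp add: divide_le_eq mult.commute)
  qed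
  have key: "(B *v v) \<bullet> (B *v w) = s\<^sup>2 * (v \<bullet> w)" if wP: "\<forall>i<k. V i \<bullet> w = 0" for w
  proof -
    define a where "a = (B *v v) \<bullet> (B *v w) - s\<^sup>2 * (v \<bullet> w)"
    define b where "b = (norm (B *v w))\<^sup>2 - s\<^sup>2 * (norm w)\<^sup>2"
    have "t * (2 * a) + t\<^sup>2 * b \<le> 0" for t
    proof -
      have xP: "\<forall>i<k. V i \<bullet> (v + t *\<^sub>R w) = 0" using vP wP by (simp add: inner_add_right)
      have "norm (B *v (v + t *\<^sub>R w)) \<le> s * norm (v + t *\<^sub>R w)" by (rule bound[OF xP])
      then have "(norm (B *v (v + t *\<^sub>R w)))\<^sup>2 \<le> (s * norm (v + t *\<^sub>R w))\<^sup>2"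
        by (simp add: power_mono)
      moreover have "(norm (B *v (v + t *\<^sub>R w)))\<^sup>2 = s\<^sup>2 + t * (2 * ((B *v v) \<bullet> (B *v w))) + t\<^sup>2 * (norm (B *v w))\<^sup>2"
        unfolding s_def by (simp add: matrix_vector_right_distrib matrix_vector_mult_scaleR norm_lin)
      moreover have "(s * norm (v + t *\<^sub>R w))\<^sup>2 = s\<^sup>2 * (1 + t * (2 * (v \<bullet> w)) + t\<^sup>2 * (norm w)\<^sup>2)"
        using nv by (simp add: power_mult_distrib norm_lin)
      ultimately show ?thesis unfolding a_def b_def by (simp add: algebra_simps)
    qed
    then have "a = 0" by (intro quad_zero) blast
    then show ?thesis unfolding a_def by simp
  qed
  define p where "p z = (\<Sum>j<k. (z \<bullet> V j) *\<^sub>R V j)" for z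
  have zP: "\<forall>i<k. V i \<bullet> (z - p z) = 0" for z unfolding p_def using perp_decomp[OF oV] by blast
  have Bp: "B *v p z = 0" for z unfolding p_def by (rule mat_kills_span[OF BV])
  have vp: "v \<bullet> p z = 0" for z unfolding p_def by (rule inner_span_zero) (use vP in \<open>simp add: inner_commute\<close>)
  have Bz: "B *v z = B *v (z - p z)" for z using Bp[of z] by (simp add: matrix_vector_mult_diff_distrib)
  have vz: "v \<bullet> z = v \<bullet> (z - p z)" for z using vp[of z] by (simp add: inner_diff_right)
  have keyall: "(B *v v) \<bullet> (B *v z) = s\<^sup>2 * (v \<bullet> z)" for z
    using key[OF zP[of z]] Bz[of z] vz[of z] by simp
  show ?thesis
  proof (cases "s = 0")
    case False
    then have sp: "s > 0" using s0 by simp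
    define u where "u = (1 / s) *\<^sub>R (B *v v)"
    have "norm u = 1" unfolding u_def using sp by (simp add: s_def)
    moreover have "\<forall>i<k. U i \<bullet> u = 0" unfolding u_def using UB by simp
    moreover have "B *v v = s *\<^sub>R u" unfolding u_def using sp by simp
    moreover have "\<forall>x. u \<bullet> (B *v x) = s * (v \<bullet> x)"
      unfolding u_def using sp keyall by (simp add: power2_eq_square)
    ultimately show ?thesis using s0 nv vP by blast
  next
    case True
    have "B *v w = 0" if "\<forall>i<k. V i \<bullet> w = 0" for w using bound[OF that] True by simp
    then have B0: "B *v z = 0" for z using Bz zP by metis
    obtain u where u: "norm u = 1" "\<forall>i<k. U i \<bullet> u = 0" using exists_perp[OF km, of U] by blast
    show ?thesis using u nv vP B0 True by (intro exI[of _ u] exI[of _ v] exI[of _ s]) simp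
  qed
qed

lemma svd_ind:
  fixes A :: "real^'n^'m"
  shows "k \<le> min CARD('m) CARD('n) \<Longrightarrow> \<exists>U s V. orthon k U \<and> orthon k V \<and> (\<forall>i<k. s i \<ge> 0)
    \<and> (\<forall>i<k. (A - (\<Sum>j<k. s j *\<^sub>R outer (U j) (V j))) *v V i = 0)
    \<and> (\<forall>i<k. \<forall>x. U i \<bullet> ((A - (\<Sum>j<k. s j *\<^sub>R outer (U j) (V j))) *v x) = 0)"
proof (induction k)
  case 0
  show ?case by (simp add: orthon_def)
next
  case (Suc k)
  then obtain U s V where oU: "orthon k U" and oV: "orthon k V" and s: "\<forall>i<k. s i \<ge> 0"
    and BV: "\<forall>i<k. (A - (\<Sum>j<k. s j *\<^sub>R outer (U j) (V j))) *v V i = 0"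
    and UB: "\<forall>i<k. \<forall>x. U i \<bullet> ((A - (\<Sum>j<k. s j *\<^sub>R outer (U j) (V j))) *v x) = 0"
    by auto
  define B where "B = A - (\<Sum>j<k. s j *\<^sub>R outer (U j) (V j))"
  have km: "k < CARD('m)" and kn: "k < CARD('n)" using Suc.prems by auto
  obtain u v \<sigma> where st: "\<sigma> \<ge> 0" "norm u = 1" "norm v = 1" "\<forall>i<k. U i \<bullet> u = 0"
     "\<forall>i<k. V i \<bullet> v = 0" "B *v v = \<sigma> *\<^sub>R u" "\<forall>x. u \<bullet> (B *v x) = \<sigma> * (v \<bullet> x)"
    using svd_step[OF km kn oU oV BV[folded B_def] UB[folded B_def]] by blast
  define U' where "U' = U(k := u)"
  define V' where "V' = V(k := v)"
  define s' where "s' = s(k := \<sigma>)"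
  have uu: "u \<bullet> u = 1" using st(2) by (simp add: norm_eq_1)
  have vv: "v \<bullet> v = 1" using st(3) by (simp add: norm_eq_1)
  have oU': "orthon (Suc k) U'" unfolding orthon_def
  proof (intro allI impI)
    fix i j assume "i < Suc k" "j < Suc k"
    then consider "i < k" "j < k" | "i < k" "j = k" | "i = k" "j < k" | "i = k" "j = k" by linarith
    then show "U' i \<bullet> U' j = (if i = j then 1 else 0)"
    proof cases
      case 1 then show ?thesis using oU unfolding orthon_def U'_def by simp
    next
      case 2 then show ?thesis using st(4) unfolding U'_def by simp
    next
      case 3 then show ?thesis using st(4) unfolding U'_def by (simp add: inner_commute)
    next
      case 4 then show ?thesis using uu unfolding U'_def by simp
    qed
  qed
  have oV': "orthon (Suc k) V'" unfolding orthon_def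
  proof (intro allI impI)
    fix i j assume "i < Suc k" "j < Suc k"
    then consider "i < k" "j < k" | "i < k" "j = k" | "i = k" "j < k" | "i = k" "j = k" by linarith
    then show "V' i \<bullet> V' j = (if i = j then 1 else 0)"
    proof cases
      case 1 then show ?thesis using oV unfolding orthon_def V'_def by simp
    next
      case 2 then show ?thesis using st(5) unfolding V'_def by simp
    next
      case 3 then show ?thesis using st(5) unfolding V'_def by (simp add: inner_commute)
    next
      case 4 then show ?thesis using vv unfolding V'_def by simp
    qed
  qed
  have sumeq: "(\<Sum>j<Suc k. s' j *\<^sub>R outer (U' j) (V' j)) = (\<Sum>j<k. s j *\<^sub>R outer (U j) (V j)) + \<sigma> *\<^sub>R outer u v"
  proof -
    have "(\<Sum>j<Suc k. s' j *\<^sub>R outer (U' j) (V' j)) = (\<Sum>j<k. s' j *\<^sub>R outer (U' j) (V' j)) + s' k *\<^sub>R outer (U' k) (V' k)"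
      by (rule sum.lessThan_Suc)
    moreover have "(\<Sum>j<k. s' j *\<^sub>R outer (U' j) (V' j)) = (\<Sum>j<k. s j *\<^sub>R outer (U j) (V j))"
      by (rule sum.cong) (auto simp: s'_def U'_def V'_def)
    ultimately show ?thesis by (simp add: s'_def U'_def V'_def)
  qed
  have B'eq: "A - (\<Sum>j<Suc k. s' j *\<^sub>R outer (U' j) (V' j)) = B - \<sigma> *\<^sub>R outer u v"
    unfolding sumeq B_def by (rule diff_diff_eq[symmetric])
  have Bx: "(B - \<sigma> *\<^sub>R outer u v) *v x = B *v x - (\<sigma> * (v \<bullet> x)) *\<^sub>R u" for x
    by (simp add: matrix_vector_mult_diff_rdistrib scaleR_matrix_vector_assoc[symmetric] outer_mult)
  have c1: "\<forall>i<Suc k. (B - \<sigma> *\<^sub>R outer u v) *v V' i = 0"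
  proof (intro allI impI)
    fix i assume "i < Suc k"
    then consider "i < k" | "i = k" by linarith
    then show "(B - \<sigma> *\<^sub>R outer u v) *v V' i = 0"
    proof cases
      case 1 then show ?thesis using BV[folded B_def] st(5) unfolding V'_def Bx by (simp add: inner_commute)
    next
      case 2 then show ?thesis using st(6) vv unfolding V'_def Bx by simp
    qed
  qed
  have c2: "\<forall>i<Suc k. \<forall>x. U' i \<bullet> ((B - \<sigma> *\<^sub>R outer u v) *v x) = 0"
  proof (intro allI impI)
    fix i x assume "i < Suc k"
    then consider "i < k" | "i = k" by linarith
    then show "U' i \<bullet> ((B - \<sigma> *\<^sub>R outer u v) *v x) = 0"
    proof cases
      case 1 then show ?thesis using UB[folded B_def] st(4) unfolding U'_def Bx by (simp add: inner_diff_right)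
    next
      case 2 then show ?thesis using st(7) uu unfolding U'_def Bx by (simp add: inner_diff_right)
    qed
  qed
  have "\<forall>i<Suc k. s' i \<ge> 0" using s st(1) unfolding s'_def by (auto simp: less_Suc_eq)
  then have "orthon (Suc k) U' \<and> orthon (Suc k) V' \<and> (\<forall>i<Suc k. s' i \<ge> 0)
    \<and> (\<forall>i<Suc k. (A - (\<Sum>j<Suc k. s' j *\<^sub>R outer (U' j) (V' j))) *v V' i = 0)
    \<and> (\<forall>i<Suc k. \<forall>x. U' i \<bullet> ((A - (\<Sum>j<Suc k. s' j *\<^sub>R outer (U' j) (V' j))) *v x) = 0)"
    using oU' oV' c1 c2 unfolding B'eq by simp
  then show ?case by (intro exI[of _ U'] exI[of _ s'] exI[of _ V'])
qed

lemma svd_exists: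
  fixes A :: "real^'n^'m"
  shows "\<exists>U s V. is_thin_svd A U s V"
proof -
  define d where "d = min CARD('m) CARD('n)"
  obtain U s V where oU: "orthon d U" and oV: "orthon d V" and s: "\<forall>i<d. s i \<ge> 0"
    and BV: "\<forall>i<d. (A - (\<Sum>j<d. s j *\<^sub>R outer (U j) (V j))) *v V i = 0"
    and UB: "\<forall>i<d. \<forall>x. U i \<bullet> ((A - (\<Sum>j<d. s j *\<^sub>R outer (U j) (V j))) *v x) = 0"
    using svd_ind[of d A] unfolding d_def by auto
  define B where "B = A - (\<Sum>j<d. s j *\<^sub>R outer (U j) (V j))"
  have "B *v z = 0" for z
  proof (cases "d = CARD('n)")
    case True
    define p where "p = (\<Sum>j<d. (z \<bullet> V j) *\<^sub>R V j)"
    have "\<forall>i<CARD('n). (z - p) \<bullet> V i = 0" using perp_decomp[OF oV, of z] True unfolding p_def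
      by (simp add: inner_commute)
    then have "z - p = 0" using full_orthon_zero[of V "z - p"] oV True by simp
    then have "z = p" by simp
    moreover have "B *v p = 0" unfolding p_def by (rule mat_kills_span[OF BV[folded B_def]])
    ultimately show ?thesis by simp
  next
    case False
    then have dm: "d = CARD('m)" unfolding d_def by linarith
    have "\<forall>i<CARD('m). (B *v z) \<bullet> U i = 0" using UB[folded B_def] dm by (simp add: inner_commute)
    then show ?thesis using full_orthon_zero[of U "B *v z"] oU dm by simp
  qed
  then have "B = 0" by (simp add: matrix_eq)
  then have "A = (\<Sum>j<d. s j *\<^sub>R outer (U j) (V j))" unfolding B_def by simp
  then show ?thesis unfolding is_thin_svd_def Let_def d_def[symmetric] using oU oV s
    unfolding orthon_def by blast
qed

lemma clip_bound:
  fixes G :: "real^'n^'m"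
  assumes "\<tau> > 0"
  shows "(fro_norm (spectral_clip \<tau> G))\<^sup>2 \<le> (fro_norm G)\<^sup>2"
    and "(fro_norm (spectral_clip \<tau> G))\<^sup>2 \<le> real (min CARD('m) CARD('n)) * \<tau>\<^sup>2"
proof -
  define d where "d = min CARD('m) CARD('n)"
  obtain U0 s0 V0 where "is_thin_svd G U0 s0 V0" using svd_exists by blast
  then have "\<exists>C. \<exists>U s V. is_thin_svd G U s V \<and>
       C = (\<Sum>k<min CARD('m) CARD('n). min (s k) \<tau> *\<^sub>R outer (U k) (V k))" by blast
  from someI_ex[OF this] obtain U s V where sv: "is_thin_svd G U s V" and
    C: "spectral_clip \<tau> G = (\<Sum>k<d. min (s k) \<tau> *\<^sub>R outer (U k) (V k))"
    unfolding spectral_clip_def d_def by blast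
  have oU: "orthon d U" and oV: "orthon d V" and s: "\<forall>k<d. s k \<ge> 0"
    and G: "G = (\<Sum>k<d. s k *\<^sub>R outer (U k) (V k))"
    using sv unfolding is_thin_svd_def Let_def d_def[symmetric] orthon_def by auto
  have e1: "(fro_norm (spectral_clip \<tau> G))\<^sup>2 = (\<Sum>k<d. (min (s k) \<tau>)\<^sup>2)"
    unfolding C by (rule fro_sum[OF oU oV])
  have e2: "(fro_norm G)\<^sup>2 = (\<Sum>k<d. (s k)\<^sup>2)"
    unfolding G by (rule fro_sum[OF oU oV])
  show "(fro_norm (spectral_clip \<tau> G))\<^sup>2 \<le> (fro_norm G)\<^sup>2"
    unfolding e1 e2 using s assms by (intro sum_mono power_mono) auto
  have "(\<Sum>k<d. (min (s k) \<tau>)\<^sup>2) \<le> (\<Sum>k<d. \<tau>\<^sup>2)"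
    using s assms by (intro sum_mono power_mono) auto
  then show "(fro_norm (spectral_clip \<tau> G))\<^sup>2 \<le> real (min CARD('m) CARD('n)) * \<tau>\<^sup>2"
    unfolding e1 d_def by simp
qed

lemma fro_norm_eq_norm: "fro_norm (A :: real^'n^'m) = norm A"
proof -
  have "norm A = sqrt (\<Sum>i\<in>UNIV. (norm (A $ i))\<^sup>2)" by (simp add: norm_vec_def L2_set_def)
  also have "\<dots> = sqrt (\<Sum>i\<in>UNIV. \<Sum>j\<in>UNIV. (A $ i $ j)\<^sup>2)"
    by (simp add: norm_vec_def L2_set_def sum_nonneg)
  finally show ?thesis unfolding fro_norm_def by simp
qed

lemma fro_tri: "(fro_norm (G :: real^'n^'m))\<^sup>2 \<le> 2 * (fro_norm M)\<^sup>2 + 2 * (fro_norm (G - M))\<^sup>2"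
proof -
  have "(\<Sum>i\<in>UNIV. \<Sum>j\<in>UNIV. (G $ i $ j)\<^sup>2) \<le> (\<Sum>i\<in>UNIV. \<Sum>j\<in>UNIV. 2 * (M $ i $ j)\<^sup>2 + 2 * ((G - M) $ i $ j)\<^sup>2)"
  proof (intro sum_mono)
    fix i j
    have "0 \<le> (G $ i $ j - 2 * M $ i $ j)\<^sup>2" by simp
    then show "(G $ i $ j)\<^sup>2 \<le> 2 * (M $ i $ j)\<^sup>2 + 2 * ((G - M) $ i $ j)\<^sup>2"
      by (simp add: power2_eq_square algebra_simps)
  qed
  then show ?thesis unfolding fro_sq by (simp add: sum.distrib sum_distrib_left)
qed

lemma scalar_bound:
  fixes x \<tau> \<alpha> d :: real
  assumes "x \<ge> 0" "\<tau> > 0" "1 < \<alpha>" "\<alpha> \<le> 2" "d \<ge> 1"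
  shows "min (2 * x\<^sup>2) (d * \<tau>\<^sup>2) \<le> 2 powr \<alpha> * d * \<tau> powr (2 - \<alpha>) * x powr \<alpha>"
proof -
  have two: "2 \<le> (2::real) powr \<alpha>"
    using powr_mono[of 1 \<alpha> 2] assms by simp
  have pos: "0 \<le> \<tau> powr (2 - \<alpha>) * x powr \<alpha>" by simp
  show ?thesis
  proof (cases "x \<le> \<tau>")
    case True
    show ?thesis
    proof (cases "x = 0")
      case True then show ?thesis using assms by (simp add: min_def)
    next
      case False
      then have xp: "x > 0" using assms by simp
      have "x powr \<alpha> * x powr (2 - \<alpha>) = x powr 2" by (simp add: powr_add[symmetric])
      then have "x\<^sup>2 = x powr \<alpha> * x powr (2 - \<alpha>)" using xp by (simp add: powr_numeral)
      also have "\<dots> \<le> x powr \<alpha> * \<tau> powr (2 - \<alpha>)"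
        using True assms by (intro mult_left_mono powr_mono2) auto
      finally have "2 * x\<^sup>2 \<le> 2 * (\<tau> powr (2 - \<alpha>) * x powr \<alpha>)" by (simp add: mult.commute)
      also have "\<dots> \<le> (2 powr \<alpha> * d) * (\<tau> powr (2 - \<alpha>) * x powr \<alpha>)"
      proof (rule mult_right_mono[OF _ pos])
        have "2 powr \<alpha> * 1 \<le> 2 powr \<alpha> * d" using assms by (intro mult_left_mono) auto
        then show "2 \<le> 2 powr \<alpha> * d" using two by (metis mult.right_neutral order_trans)
      qed
      finally show ?thesis by (simp add: mult_ac)
    qed
  next
    case False
    have "\<tau> powr (2 - \<alpha>) * \<tau> powr \<alpha> = \<tau> powr 2" by (simp add: powr_add[symmetric])
    then have "\<tau>\<^sup>2 = \<tau> powr (2 - \<alpha>) * \<tau> powr \<alpha>" using assms by (simp add: powr_numeral)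
    also have "\<dots> \<le> \<tau> powr (2 - \<alpha>) * x powr \<alpha>"
      using False assms by (intro mult_left_mono powr_mono2) auto
    finally have "d * \<tau>\<^sup>2 \<le> d * (\<tau> powr (2 - \<alpha>) * x powr \<alpha>)" using assms by (intro mult_left_mono) auto
    also have "\<dots> \<le> (2 powr \<alpha> * d) * (\<tau> powr (2 - \<alpha>) * x powr \<alpha>)"
    proof (rule mult_right_mono[OF _ pos])
      show "d \<le> 2 powr \<alpha> * d" using two assms by (simp add: mult_le_cancel_right1)
    qed
    finally show ?thesis by (simp add: mult_ac)
  qed
qed

theorem mainTheorem6:
  fixes M :: "'a measure" and G :: "'a \<Rightarrow> real^'n^'m"
    and Mbar :: "real^'n^'m" and \<alpha> \<sigma> \<tau> :: real
  assumes "prob_space M"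
    and "G \<in> borel_measurable M"
    and "integrable M G" and "(\<integral>\<omega>. G \<omega> \<partial>M) = Mbar"
    and "1 < \<alpha>" and "\<alpha> \<le> 2" and "\<sigma> > 0"
    and "(\<integral>\<^sup>+\<omega>. ennreal (fro_norm (G \<omega> - Mbar) powr \<alpha>) \<partial>M) \<le> ennreal (\<sigma> powr \<alpha>)"
    and "\<tau> > 0"
    and "fro_norm Mbar \<le> \<tau> / 2"
  shows "(\<integral>\<^sup>+\<omega>. ennreal ((fro_norm (spectral_clip \<tau> (G \<omega>)))\<^sup>2) \<partial>M)
           \<le> ennreal (2 * (fro_norm Mbar)\<^sup>2
              + (2 powr \<alpha> * real (min CARD('m) CARD('n)) + 3 * (2/3) powr (\<alpha> - 1))
                * \<tau> powr (2 - \<alpha>) * \<sigma> powr \<alpha>)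
       \<and> 2 * (fro_norm Mbar)\<^sup>2
              + (2 powr \<alpha> * real (min CARD('m) CARD('n)) + 3 * (2/3) powr (\<alpha> - 1))
                * \<tau> powr (2 - \<alpha>) * \<sigma> powr \<alpha>
         \<le> 2 * (fro_norm Mbar)\<^sup>2 + 8 * real (min CARD('m) CARD('n)) * \<tau> powr (2 - \<alpha>) * \<sigma> powr \<alpha>"
proof -
  interpret P: prob_space M by fact
  define d where "d = real (min CARD('m) CARD('n))"
  define C where "C = 2 powr \<alpha> * d * \<tau> powr (2 - \<alpha>)"
  define h where "h \<omega> = fro_norm (G \<omega> - Mbar) powr \<alpha>" for \<omega>
  define m2 where "m2 = 2 * (fro_norm Mbar)\<^sup>2"
  have d1: "d \<ge> 1" unfolding d_def by simp
  have C0: "C \<ge> 0" unfolding C_def d_def by simp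
  have m20: "m2 \<ge> 0" unfolding m2_def by simp
  have pw: "(fro_norm (spectral_clip \<tau> (G \<omega>)))\<^sup>2 \<le> m2 + C * h \<omega>" for \<omega>
  proof -
    have "(fro_norm (spectral_clip \<tau> (G \<omega>)))\<^sup>2 \<le> min (m2 + 2 * (fro_norm (G \<omega> - Mbar))\<^sup>2) (d * \<tau>\<^sup>2)"
      using clip_bound[OF assms(9), of "G \<omega>"] fro_tri[of "G \<omega>" Mbar] unfolding m2_def d_def by simp
    also have "\<dots> \<le> m2 + min (2 * (fro_norm (G \<omega> - Mbar))\<^sup>2) (d * \<tau>\<^sup>2)"
      using m20 by (simp add: min_def)
    also have "\<dots> \<le> m2 + C * h \<omega>"
      using scalar_bound[of "fro_norm (G \<omega> - Mbar)" \<tau> \<alpha> d] assms d1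
      unfolding C_def h_def by (simp add: fro_norm_eq_norm)
    finally show ?thesis .
  qed
  have hmeas: "(\<lambda>\<omega>. ennreal (h \<omega>)) \<in> borel_measurable M"
    unfolding h_def fro_norm_eq_norm using assms(2) by measurable
  have "(\<integral>\<^sup>+\<omega>. ennreal ((fro_norm (spectral_clip \<tau> (G \<omega>)))\<^sup>2) \<partial>M)
        \<le> (\<integral>\<^sup>+\<omega>. ennreal m2 + ennreal C * ennreal (h \<omega>) \<partial>M)"
  proof (rule nn_integral_mono)
    fix \<omega>
    have "ennreal ((fro_norm (spectral_clip \<tau> (G \<omega>)))\<^sup>2) \<le> ennreal (m2 + C * h \<omega>)"
      by (rule ennreal_leI[OF pw])
    also have "\<dots> = ennreal m2 + ennreal C * ennreal (h \<omega>)"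
      using m20 C0 by (simp add: h_def ennreal_plus ennreal_mult)
    finally show "ennreal ((fro_norm (spectral_clip \<tau> (G \<omega>)))\<^sup>2) \<le> ennreal m2 + ennreal C * ennreal (h \<omega>)" .
  qed
  also have "\<dots> = ennreal m2 + ennreal C * (\<integral>\<^sup>+\<omega>. ennreal (h \<omega>) \<partial>M)"
    using hmeas by (simp add: nn_integral_add nn_integral_cmult P.emeasure_space_1)
  also have "\<dots> \<le> ennreal m2 + ennreal C * ennreal (\<sigma> powr \<alpha>)"
    using assms(8) unfolding h_def by (intro add_left_mono mult_left_mono) auto
  also have "\<dots> = ennreal (m2 + C * \<sigma> powr \<alpha>)"
    using m20 C0 by (simp add: ennreal_plus ennreal_mult)
  also have "\<dots> \<le> ennreal (2 * (fro_norm Mbar)\<^sup>2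
              + (2 powr \<alpha> * real (min CARD('m) CARD('n)) + 3 * (2/3) powr (\<alpha> - 1))
                * \<tau> powr (2 - \<alpha>) * \<sigma> powr \<alpha>)"
  proof (rule ennreal_leI)
    have "C * \<sigma> powr \<alpha> \<le> (2 powr \<alpha> * d + 3 * (2/3) powr (\<alpha> - 1)) * \<tau> powr (2 - \<alpha>) * \<sigma> powr \<alpha>"
      unfolding C_def by (intro mult_right_mono) auto
    then show "m2 + C * \<sigma> powr \<alpha> \<le> 2 * (fro_norm Mbar)\<^sup>2
              + (2 powr \<alpha> * real (min CARD('m) CARD('n)) + 3 * (2/3) powr (\<alpha> - 1))
                * \<tau> powr (2 - \<alpha>) * \<sigma> powr \<alpha>" unfolding m2_def d_def by simp
  qed
  finally have part1: "(\<integral>\<^sup>+\<omega>. ennreal ((fro_norm (spectral_clip \<tau> (G \<omega>)))\<^sup>2) \<partial>M)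
        \<le> ennreal (2 * (fro_norm Mbar)\<^sup>2
              + (2 powr \<alpha> * real (min CARD('m) CARD('n)) + 3 * (2/3) powr (\<alpha> - 1))
                * \<tau> powr (2 - \<alpha>) * \<sigma> powr \<alpha>)" .
  have p4: "2 powr \<alpha> \<le> (4::real)"
    using powr_mono[of \<alpha> 2 2] assms by simp
  have p1: "(2/3::real) powr (\<alpha> - 1) \<le> 1"
    using assms by (intro powr_le1) auto
  have "2 powr \<alpha> * d + 3 * (2/3) powr (\<alpha> - 1) \<le> 8 * d"
  proof -
    have "2 powr \<alpha> * d \<le> 4 * d" using p4 d1 by (intro mult_right_mono) auto
    then show ?thesis using p1 d1 by linarith
  qed
  then have "(2 powr \<alpha> * d + 3 * (2/3) powr (\<alpha> - 1)) * (\<tau> powr (2 - \<alpha>) * \<sigma> powr \<alpha>)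
       \<le> (8 * d) * (\<tau> powr (2 - \<alpha>) * \<sigma> powr \<alpha>)"
    by (intro mult_right_mono) auto
  then have part2: "2 * (fro_norm Mbar)\<^sup>2
              + (2 powr \<alpha> * real (min CARD('m) CARD('n)) + 3 * (2/3) powr (\<alpha> - 1))
                * \<tau> powr (2 - \<alpha>) * \<sigma> powr \<alpha>
         \<le> 2 * (fro_norm Mbar)\<^sup>2 + 8 * real (min CARD('m) CARD('n)) * \<tau> powr (2 - \<alpha>) * \<sigma> powr \<alpha>"
    unfolding d_def by (simp add: mult_ac)
  show ?thesis using part1 part2 by blast
qed

end
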